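(* Let $\alpha,\beta>0$ with $\beta>\alpha$, set $\tau=(\beta-\alpha)^{-1}$, and let $S_0>0$, $I_0>0$. Let $(S(t),I(t),R(t))$ be the solution of $$\dot S=-\frac{\beta SI}{S+I},\qquad \dot I=\frac{\beta SI}{S+I}-\alpha I,\qquad \dot R=\alpha I$$ with $S(0)=S_0$, $I(0)=I_0$. Then $\dot I(0)>0$ if and only if $\frac{\beta}{\alpha}-1>\frac{I_0}{S_0}$. Moreover, $I$ attains its maximum (over all real $t$) at $$t_{\mathrm{peak}}=\tau\log\left(\frac{S_0}{I_0}\left(\frac{\beta}{\alpha}-1\right)\right),$$ which is positive if and only if $\frac{\beta}{\alpha}-1>\frac{I_0}{S_0}$, and $$I(t_{\mathrm{peak}})=S_0\left(\frac{\beta}{\alpha}-1\right)\left(\frac{\alpha}{\beta}\left(1+\frac{I_0}{S_0}\right)\right)^{\beta/(\beta-\alpha)}.$$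
   Context: Modified SIR epidemiological model with recovery rate $\alpha$ and transmission rate $\beta$; $S,I,R$ are fractions of susceptible, infective and removed individuals. *)

theory Defs
  imports "HOL-Analysis.Analysis"
begin

end

theory Submission
  imports Defs
begin

lemma aux_distr: "(x::real) * a + b * x = x * (a + b)" by (simp add: algebra_simps)

lemma local_inv:
  fixes \<alpha> \<beta> S0 I0 :: real and S I :: "real \<Rightarrow> real" and J :: "real set"
  assumes "\<alpha> > 0" "\<beta> > \<alpha>" "S0 > 0" "I0 > 0"
    and dS: "\<And>t. (S has_real_derivative (- \<beta> * S t * I t / (S t + I t))) (at t)"
    and dI: "\<And>t. (I has_real_derivative (\<beta> * S t * I t / (S t + I t) - \<alpha> * I t)) (at t)"
    and S0: "S 0 = S0" and I0: "I 0 = I0"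
    and J: "convex J" "0 \<in> J" and pos: "\<And>t. t \<in> J \<Longrightarrow> S t > 0 \<and> I t > 0"
  shows "\<forall>t\<in>J. I t = I0 / S0 * exp ((\<beta>-\<alpha>)*t) * S t \<and>
      S t * (1 + I0 / S0 * exp ((\<beta>-\<alpha>)*t)) powr (\<beta>/(\<beta>-\<alpha>)) = S0 * (1 + I0/S0) powr (\<beta>/(\<beta>-\<alpha>))"
proof -
  define c where "c = \<beta> - \<alpha>"
  define k where "k = \<beta> / c"
  have c: "c > 0" using assms by (simp add: c_def)
  have kc: "k * c = \<beta>" using c by (simp add: k_def)
  have "\<exists>C. \<forall>t\<in>J. I t / S t * exp (-c*t) = C"
  proof (rule has_field_derivative_zero_constant[OF J(1)])
    fix t assume t: "t \<in> J"
    have St: "S t > 0" "I t > 0" using pos[OF t] by auto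
    have E: "((\<lambda>t. exp (-c*t)) has_real_derivative exp (-c*t) * (-c)) (at t)"
      by (auto intro!: derivative_eq_intros)
    have "((\<lambda>t. I t / S t * exp (-c*t)) has_real_derivative
       (((\<beta> * S t * I t / (S t + I t) - \<alpha> * I t) * S t - I t * (- \<beta> * S t * I t / (S t + I t))) / (S t * S t)) * exp (-c*t)
        + (exp (-c*t) * (-c)) * (I t / S t)) (at t)"
      by (intro DERIV_mult DERIV_divide dS dI E) (use St in simp)
    moreover have "(((\<beta> * S t * I t / (S t + I t) - \<alpha> * I t) * S t - I t * (- \<beta> * S t * I t / (S t + I t))) / (S t * S t)) * exp (-c*t)
        + (exp (-c*t) * (-c)) * (I t / S t) = 0"
    proof -
      have N: "\<beta> * S t * I t / (S t + I t) * S t + I t * (\<beta> * S t * I t / (S t + I t)) = \<beta> * S t * I t"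
      proof -
        have "\<beta> * S t * I t / (S t + I t) * S t + I t * (\<beta> * S t * I t / (S t + I t)) = \<beta> * S t * I t / (S t + I t) * (S t + I t)"
          by (rule aux_distr)
        also have "\<dots> = \<beta> * S t * I t" using St by simp
        finally show ?thesis .
      qed
      have "((\<beta> * S t * I t / (S t + I t) - \<alpha> * I t) * S t - I t * (- \<beta> * S t * I t / (S t + I t)))
           = (\<beta> * S t * I t / (S t + I t) * S t + I t * (\<beta> * S t * I t / (S t + I t))) - \<alpha> * I t * S t"
        by (simp add: algebra_simps)
      also have "\<dots> = c * (S t * I t)" using N by (simp add: c_def algebra_simps)
      finally have "((\<beta> * S t * I t / (S t + I t) - \<alpha> * I t) * S t - I t * (- \<beta> * S t * I t / (S t + I t))) / (S t * S t)
          = c * (I t / S t)" using St by (simp add: field_simps)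
      then show ?thesis by (simp add: algebra_simps)
    qed
    ultimately have "((\<lambda>t. I t / S t * exp (-c*t)) has_real_derivative 0) (at t)" by simp
    then show "((\<lambda>t. I t / S t * exp (-c*t)) has_real_derivative 0) (at t within J)"
      by (simp add: has_field_derivative_at_within)
  qed
  then obtain C where C: "\<And>t. t \<in> J \<Longrightarrow> I t / S t * exp (-c*t) = C" by blast
  have "C = I0 / S0" using C[OF J(2)] S0 I0 by simp
  have inv1: "I t = I0 / S0 * exp (c*t) * S t" if t: "t \<in> J" for t
  proof -
    have St: "S t > 0" "I t > 0" using pos[OF t] by auto
    have "I t / S t * exp (-c*t) = I0/S0" using C[OF t] \<open>C = I0 / S0\<close> by simp
    then show ?thesis using St by (simp add: field_simps exp_minus)
  qed
  define X where "X t = I0 / S0 * exp (c*t)" for t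
  have Xpos: "X t > 0" for t using assms by (simp add: X_def)
  have "\<exists>C. \<forall>t\<in>J. S t * (1 + X t) powr k = C"
  proof (rule has_field_derivative_zero_constant[OF J(1)])
    fix t assume t: "t \<in> J"
    have St: "S t > 0" "I t > 0" using pos[OF t] by auto
    have It: "I t = X t * S t" using inv1[OF t] by (simp add: X_def)
    have DX: "((\<lambda>t. 1 + X t) has_real_derivative X t * c) (at t)"
      unfolding X_def using assms by (auto intro!: derivative_eq_intros)
    have DP: "((\<lambda>t. (1 + X t) powr k) has_real_derivative (k * (1 + X t) powr (k - 1)) * (X t * c)) (at t)"
      by (rule DERIV_chain2[OF has_real_derivative_powr DX]) (use Xpos[of t] in simp)
    have D: "((\<lambda>t. S t * (1 + X t) powr k) has_real_derivative
       (- \<beta> * S t * I t / (S t + I t)) * (1 + X t) powr k + ((k * (1 + X t) powr (k - 1)) * (X t * c)) * S t) (at t)"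
      by (rule DERIV_mult[OF dS DP])
    have pk: "(1 + X t) powr k = (1 + X t) powr (k - 1) * (1 + X t)"
      using Xpos[of t] by (simp add: powr_diff)
    have "- \<beta> * S t * I t / (S t + I t) = - \<beta> * X t / (1 + X t) * S t"
    proof -
      have h: "S t + X t * S t = S t * (1 + X t)" by (simp add: algebra_simps)
      have "- \<beta> * S t * (X t * S t) / (S t * (1 + X t)) = (- \<beta> * X t * S t) * S t / (S t * (1 + X t))"
        by (simp add: algebra_simps)
      also have "\<dots> = - \<beta> * X t / (1 + X t) * S t" using St Xpos[of t] by simp
      finally show ?thesis unfolding It h .
    qed
    note EQ = this
    have "- \<beta> * X t / (1 + X t) * S t * ((1 + X t) powr (k - 1) * (1 + X t)) = - \<beta> * X t * S t * (1 + X t) powr (k - 1)"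
      using Xpos[of t] by (simp add: field_simps)
    then have "(- \<beta> * S t * I t / (S t + I t)) * (1 + X t) powr k + ((k * (1 + X t) powr (k - 1)) * (X t * c)) * S t
       = - \<beta> * X t * S t * (1 + X t) powr (k - 1) + (k * c) * X t * S t * (1 + X t) powr (k - 1)"
      unfolding pk EQ by (simp add: algebra_simps)
    also have "\<dots> = 0" using kc by simp
    finally have "((\<lambda>t. S t * (1 + X t) powr k) has_real_derivative 0) (at t)" using D by simp
    then show "((\<lambda>t. S t * (1 + X t) powr k) has_real_derivative 0) (at t within J)"
      by (simp add: has_field_derivative_at_within)
  qed
  then obtain C2 where C2: "\<And>t. t \<in> J \<Longrightarrow> S t * (1 + X t) powr k = C2" by blast
  have "C2 = S0 * (1 + I0/S0) powr k" using C2[OF J(2)] S0 by (simp add: X_def)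
  then show ?thesis using inv1 C2 unfolding X_def k_def c_def by auto
qed
lemma ext_left:
  fixes f :: "real \<Rightarrow> real"
  assumes "isCont f b" "a < b" "\<And>t. t \<in> {a<..<b} \<Longrightarrow> f t = 0"
  shows "f b = 0"
proof -
  have 1: "(f \<longlongrightarrow> f b) (at_left b)"
    using assms(1) unfolding isCont_def by (rule tendsto_mono[OF at_within_le_at])
  have "eventually (\<lambda>t. t \<in> {a<..<b}) (at_left b)" using assms(2) by (rule eventually_at_left_real)
  then have "eventually (\<lambda>t. f t = 0) (at_left b)" by (rule eventually_mono) (use assms(3) in auto)
  then have 2: "(f \<longlongrightarrow> 0) (at_left b)" by (rule tendsto_eventually) 
  show ?thesis using tendsto_unique[OF trivial_limit_at_left_real 1 2] .
qed

lemma ext_right: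
  fixes f :: "real \<Rightarrow> real"
  assumes "isCont f b" "b < a" "\<And>t. t \<in> {b<..<a} \<Longrightarrow> f t = 0"
  shows "f b = 0"
proof -
  have 1: "(f \<longlongrightarrow> f b) (at_right b)"
    using assms(1) unfolding isCont_def by (rule tendsto_mono[OF at_within_le_at])
  have "eventually (\<lambda>t. t \<in> {b<..<a}) (at_right b)" using assms(2) by (rule eventually_at_right_real)
  then have "eventually (\<lambda>t. f t = 0) (at_right b)" by (rule eventually_mono) (use assms(3) in auto)
  then have 2: "(f \<longlongrightarrow> 0) (at_right b)" by (rule tendsto_eventually) 
  show ?thesis using tendsto_unique[OF trivial_limit_at_right_real 1 2] .
qed

lemma peak_ineq:
  fixes k u :: real
  assumes k: "k > 1" and u: "u > 0"
  shows "u * (1 + 1/(k-1)) powr k \<le> 1/(k-1) * (1 + u) powr k"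
proof -
  define a where "a = (k-1) * u"
  have a: "a > 0" using k u by (simp add: a_def)
  have "a powr (1/k) * 1 powr (1 - 1/k) \<le> (1/k) * a + (1 - 1/k) * 1"
    by (rule Youngs_inequality_0) (use k a in auto)
  also have "\<dots> = ((k-1)/k) * (1 + u)" using k by (simp add: a_def field_simps)
  finally have "a powr (1/k) \<le> ((k-1)/k) * (1 + u)" by simp
  note le1 = this
  have "(a powr (1/k)) powr k \<le> (((k-1)/k) * (1 + u)) powr k"
    by (rule powr_mono2[OF _ _ le1]) (use k a in auto)
  also have "(a powr (1/k)) powr k = a" using k a by (simp add: powr_powr)
  also have "(((k-1)/k) * (1 + u)) powr k = ((k-1)/k) powr k * (1 + u) powr k"
    using k u by (intro powr_mult)
  finally have *: "a \<le> ((k-1)/k) powr k * (1 + u) powr k" .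
  have e: "1 + 1/(k-1) = k/(k-1)" using k by (simp add: field_simps)
  have inv: "(k/(k-1)) powr k * ((k-1)/k) powr k = 1"
    using k by (simp add: powr_mult[symmetric])
  have "u * (k/(k-1)) powr k = (1/(k-1)) * (k/(k-1)) powr k * a" using k by (simp add: a_def)
  also have "\<dots> \<le> (1/(k-1)) * (k/(k-1)) powr k * (((k-1)/k) powr k * (1 + u) powr k)"
    by (rule mult_left_mono[OF *]) (use k in simp)
  also have "\<dots> = 1/(k-1) * (1 + u) powr k" using inv by (simp add: algebra_simps)
  finally show ?thesis unfolding e .
qed


theorem mainTheorem2:
  fixes \<alpha> \<beta> S\<^sub>0 I\<^sub>0 :: real and S I R :: "real \<Rightarrow> real"
  assumes "\<alpha> > 0" and "\<beta> > 0" and "\<beta> > \<alpha>"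
    and "S\<^sub>0 > 0" and "I\<^sub>0 > 0"
    and dS: "\<And>t. (S has_real_derivative (- \<beta> * S t * I t / (S t + I t))) (at t)"
    and dI: "\<And>t. (I has_real_derivative (\<beta> * S t * I t / (S t + I t) - \<alpha> * I t)) (at t)"
    and dR: "\<And>t. (R has_real_derivative (\<alpha> * I t)) (at t)"
    and "S 0 = S\<^sub>0" and "I 0 = I\<^sub>0"
  shows "(deriv I 0 > 0 \<longleftrightarrow> \<beta> / \<alpha> - 1 > I\<^sub>0 / S\<^sub>0)
    \<and> (let \<tau> = 1 / (\<beta> - \<alpha>);
           t_peak = \<tau> * ln ((S\<^sub>0 / I\<^sub>0) * (\<beta> / \<alpha> - 1))
       in (\<forall>t. I t \<le> I t_peak)
          \<and> (t_peak > 0 \<longleftrightarrow> \<beta> / \<alpha> - 1 > I\<^sub>0 / S\<^sub>0)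
          \<and> I t_peak = S\<^sub>0 * (\<beta> / \<alpha> - 1)
               * ((\<alpha> / \<beta>) * (1 + I\<^sub>0 / S\<^sub>0)) powr (\<beta> / (\<beta> - \<alpha>)))"
proof -
  note pars = assms(1-5)
  define c where "c = \<beta> - \<alpha>"
  define k where "k = \<beta> / c"
  define x0 where "x0 = I\<^sub>0 / S\<^sub>0"
  define X where "X t = x0 * exp (c*t)" for t
  define C0 where "C0 = S\<^sub>0 * (1 + x0) powr k"
  have c: "c > 0" using pars by (simp add: c_def)
  have x0: "x0 > 0" using pars by (simp add: x0_def)
  have Xpos: "X t > 0" for t using x0 by (simp add: X_def)
  have C0: "C0 > 0" using pars x0 by (simp add: C0_def)
  have contS: "isCont S t" for t using dS by (rule DERIV_isCont)
  have contI: "isCont I t" for t using dI by (rule DERIV_isCont)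
  have contF1: "isCont (\<lambda>t. I t - X t * S t) t" for t
    unfolding X_def by (intro continuous_intros contS contI)
  have contF2: "isCont (\<lambda>t. S t * (1 + X t) powr k - C0) t" for t
    unfolding X_def using Xpos[of t] by (intro continuous_intros contS contI) (auto simp: X_def)
  have loc: "\<forall>t\<in>J. I t = X t * S t \<and> S t * (1 + X t) powr k = C0"
    if "convex J" "0 \<in> J" "\<And>t. t \<in> J \<Longrightarrow> S t > 0 \<and> I t > 0" for J
    using local_inv[of \<alpha> \<beta> S\<^sub>0 I\<^sub>0 S I J, OF pars(1) pars(3) pars(4) pars(5) dS dI assms(9) assms(10) that]
    unfolding X_def x0_def c_def k_def C0_def by simp
  have posb: "S b > 0 \<and> I b > 0" if "I b - X b * S b = 0" "S b * (1 + X b) powr k - C0 = 0" for b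
  proof -
    have "S b * (1 + X b) powr k > 0" using that(2) C0 by simp
    moreover have "(1 + X b) powr k > 0" using Xpos[of b] by simp
    ultimately have "S b > 0" by (simp add: zero_less_mult_iff)
    moreover have "I b = X b * S b" using that(1) by simp
    ultimately show ?thesis using Xpos[of b] by simp
  qed
  have P0: "S 0 > 0 \<and> I 0 > 0" using pars assms(9,10) by simp
  have closedA: "closed {t. \<not> (S t > 0 \<and> I t > 0)}"
  proof -
    have "{t. \<not> (S t > 0 \<and> I t > 0)} = {t. S t \<le> 0} \<union> {t. I t \<le> 0}" by auto
    moreover have "closed {t. S t \<le> 0}"
      by (rule closed_Collect_le) (auto intro: continuous_at_imp_continuous_on contS)
    moreover have "closed {t. I t \<le> 0}"
      by (rule closed_Collect_le) (auto intro: continuous_at_imp_continuous_on contI)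
    ultimately show ?thesis by auto
  qed
  have allpos: "S t > 0 \<and> I t > 0" for t
  proof (rule ccontr)
    assume nt: "\<not> (S t > 0 \<and> I t > 0)"
    then have "t \<noteq> 0" using P0 by auto
    then consider "t > 0" | "t < 0" by linarith
    then show False
    proof cases
      case 1
      define A where "A = {0..t} \<inter> {s. \<not> (S s > 0 \<and> I s > 0)}"
      have cA: "closed A" unfolding A_def using closedA by auto
      have "t \<in> A" using nt 1 unfolding A_def by auto
      then have neA: "A \<noteq> {}" by auto
      have bA: "bdd_below A" unfolding A_def by (auto intro: bdd_belowI[of _ 0])
      define b where "b = Inf A"
      have bin: "b \<in> A" unfolding b_def by (rule closed_contains_Inf[OF neA bA cA])
      have b0: "b > 0" using bin P0 unfolding A_def by (cases "b = 0") auto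
      have below: "S s > 0 \<and> I s > 0" if "s \<in> {0..<b}" for s
      proof (rule ccontr)
        assume "\<not> (S s > 0 \<and> I s > 0)"
        then have "s \<in> A" using that bin unfolding A_def by auto
        then have "b \<le> s" unfolding b_def by (rule cInf_lower[OF _ bA])
        then show False using that by auto
      qed
      have L: "\<forall>s\<in>{0..<b}. I s = X s * S s \<and> S s * (1 + X s) powr k = C0"
        by (rule loc) (use b0 below in auto)
      have "I b - X b * S b = 0" by (rule ext_left[OF contF1 b0]) (use L in auto)
      moreover have "S b * (1 + X b) powr k - C0 = 0" by (rule ext_left[OF contF2 b0]) (use L in auto)
      ultimately have "S b > 0 \<and> I b > 0" by (rule posb)
      then show False using bin unfolding A_def by auto
    next
      case 2
      define A where "A = {t..0} \<inter> {s. \<not> (S s > 0 \<and> I s > 0)}"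
      have cA: "closed A" unfolding A_def using closedA by auto
      have "t \<in> A" using nt 2 unfolding A_def by auto
      then have neA: "A \<noteq> {}" by auto
      have bA: "bdd_above A" unfolding A_def by (auto intro: bdd_aboveI[of _ 0])
      define b where "b = Sup A"
      have bin: "b \<in> A" unfolding b_def by (rule closed_contains_Sup[OF neA bA cA])
      have b0: "b < 0" using bin P0 unfolding A_def by (cases "b = 0") auto
      have above: "S s > 0 \<and> I s > 0" if "s \<in> {b<..0}" for s
      proof (rule ccontr)
        assume "\<not> (S s > 0 \<and> I s > 0)"
        then have "s \<in> A" using that bin unfolding A_def by auto
        then have "s \<le> b" unfolding b_def by (rule cSup_upper[OF _ bA])
        then show False using that by auto
      qed
      have L: "\<forall>s\<in>{b<..0}. I s = X s * S s \<and> S s * (1 + X s) powr k = C0"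
        by (rule loc) (use b0 above in auto)
      have "I b - X b * S b = 0" by (rule ext_right[OF contF1 b0]) (use L in auto)
      moreover have "S b * (1 + X b) powr k - C0 = 0" by (rule ext_right[OF contF2 b0]) (use L in auto)
      ultimately have "S b > 0 \<and> I b > 0" by (rule posb)
      then show False using bin unfolding A_def by auto
    qed
  qed
  have G: "I t = X t * S t \<and> S t * (1 + X t) powr k = C0" for t
    using loc[of UNIV] allpos by auto
  have Iform: "I t = C0 * (X t / (1 + X t) powr k)" for t
  proof -
    have "S t = C0 / (1 + X t) powr k" using G[of t] Xpos[of t] by (simp add: field_simps)
    then show ?thesis using G[of t] by simp
  qed

  define us where "us = \<beta> / \<alpha> - 1"
  have us: "us > 0" using pars by (simp add: us_def field_simps)
  have k1: "k > 1" using pars by (simp add: k_def c_def field_simps)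
  have usk: "us = 1 / (k - 1)" using pars by (simp add: us_def k_def c_def field_simps)
  have d0: "deriv I 0 = \<beta> * S\<^sub>0 * I\<^sub>0 / (S\<^sub>0 + I\<^sub>0) - \<alpha> * I\<^sub>0"
    using DERIV_imp_deriv[OF dI[of 0]] assms(9,10) by simp
  have part1: "deriv I 0 > 0 \<longleftrightarrow> \<beta> / \<alpha> - 1 > I\<^sub>0 / S\<^sub>0"
  proof -
    have "deriv I 0 > 0 \<longleftrightarrow> \<alpha> * I\<^sub>0 < \<beta> * S\<^sub>0 * I\<^sub>0 / (S\<^sub>0 + I\<^sub>0)" using d0 by simp
    also have "\<dots> \<longleftrightarrow> \<alpha> * I\<^sub>0 * (S\<^sub>0 + I\<^sub>0) < \<beta> * S\<^sub>0 * I\<^sub>0" using pars by (simp add: less_divide_eq)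
    also have "\<dots> \<longleftrightarrow> \<alpha> * (S\<^sub>0 + I\<^sub>0) < \<beta> * S\<^sub>0" 
    proof -
      have "\<alpha> * I\<^sub>0 * (S\<^sub>0 + I\<^sub>0) = I\<^sub>0 * (\<alpha> * (S\<^sub>0 + I\<^sub>0))" "\<beta> * S\<^sub>0 * I\<^sub>0 = I\<^sub>0 * (\<beta> * S\<^sub>0)"
        by (simp_all add: algebra_simps)
      then show ?thesis using pars(5) by (simp only: mult_less_cancel_left_pos)
    qed
    also have "\<dots> \<longleftrightarrow> \<beta> / \<alpha> - 1 > I\<^sub>0 / S\<^sub>0" using pars by (simp add: field_simps)
    finally show ?thesis .
  qed
  define tp where "tp = 1 / (\<beta> - \<alpha>) * ln ((S\<^sub>0 / I\<^sub>0) * (\<beta> / \<alpha> - 1))"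
  have arg: "(S\<^sub>0 / I\<^sub>0) * (\<beta> / \<alpha> - 1) = us / x0" using pars by (simp add: us_def x0_def)
  have argp: "us / x0 > 0" using us x0 by simp
  have Xtp: "X tp = us"
  proof -
    have "c * tp = ln (us / x0)" unfolding tp_def arg c_def using c by (simp add: c_def)
    then show ?thesis unfolding X_def using argp x0 by simp
  qed
  have maxp: "I t \<le> I tp" for t
  proof -
    have "X t * (1 + us) powr k \<le> us * (1 + X t) powr k"
      using peak_ineq[OF k1 Xpos[of t]] unfolding usk .
    then have "X t / (1 + X t) powr k \<le> us / (1 + us) powr k"
      using Xpos[of t] us by (simp add: divide_simps mult.commute)
    then show ?thesis unfolding Iform Xtp by (rule mult_left_mono) (use C0 in simp)
  qed
  have tpos: "tp > 0 \<longleftrightarrow> \<beta> / \<alpha> - 1 > I\<^sub>0 / S\<^sub>0"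
  proof -
    have "tp > 0 \<longleftrightarrow> ln (us / x0) > 0" unfolding tp_def arg using pars by (simp add: zero_less_divide_iff)
    also have "\<dots> \<longleftrightarrow> us / x0 > 1" using argp by simp
    also have "\<dots> \<longleftrightarrow> us > x0" using x0 by simp
    finally show ?thesis by (simp add: us_def x0_def)
  qed
  have val: "I tp = S\<^sub>0 * (\<beta> / \<alpha> - 1) * ((\<alpha> / \<beta>) * (1 + I\<^sub>0 / S\<^sub>0)) powr (\<beta> / (\<beta> - \<alpha>))"
  proof -
    have b1: "1 + us = \<beta> / \<alpha>" by (simp add: us_def)
    have "((\<alpha> / \<beta>) * (1 + x0)) powr k = (\<alpha> / \<beta>) powr k * (1 + x0) powr k"
      using pars x0 by (intro powr_mult)
    also have "(\<alpha> / \<beta>) powr k = 1 / (\<beta> / \<alpha>) powr k"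
      using pars by (simp add: powr_divide)
    finally have e: "((\<alpha> / \<beta>) * (1 + x0)) powr k = (1 + x0) powr k / (\<beta> / \<alpha>) powr k" by simp
    show ?thesis unfolding Iform Xtp b1 C0_def
      using e unfolding x0_def k_def c_def[symmetric] by (simp add: us_def)
  qed
  show ?thesis using part1 maxp tpos val unfolding Let_def tp_def by blast
qed

end
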